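(* Let $B$ be a Boolean algebra and let $U,V,W$ be CFG-spaces over $B$ with $U\cup V\subset W$ (the metrics on $U$ and $V$ being the restrictions of that of $W$), and let $F:U\to V$ be an isometry. Then there is an isometry $F':W\to W$ whose restriction to $U$ is $F$.
   Context: A Boolean metric space over a Boolean algebra $B$ is a set $X$ with a symmetric map $d:X\times X\to B$ such that $d(x,y)=0$ iff $x=y$, and $d(x,z)\le d(x,y)\vee d(y,z)$ for all $x,y,z$. A map $f:X\to Y$ between such spaces is contractive if $d(f(x),f(y))\le d(x,y)$ for all $x,y$; an isometry is a bijection with $d(f(x),f(y))=d(x,y)$ for all $x,y$. A partition of $B$ is a finite family $a_0,\dots,a_n$ of pairwise disjoint elements ($a_i\wedge a_j=0$ for $i\ne j$) with $a_0\vee\dots\vee a_n=1$. Given $x_0,\dots,x_n\in X$ and a partition $a_0,\dots,a_n$, an element $x\in X$ is a convex combination of the $x_i$ with coefficients $a_i$ if $a_i\wedge d(x,x_i)=0$ for all $i$. $X$ is convex if for every $x_0,\dots,x_n\in X$ and every partition $a_0,\dots,a_n$ of $B$ there exists such a convex combination in $X$; $X$ is finitely generated if there is a finite $S\subset X$ such that every element of $X$ is a convex combination of elements of $S$. A CFG-space is a convex, finitely generated Boolean metric space. *)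

theory Defs
  imports Main
begin

definition bool_metric :: "'a set \<Rightarrow> ('a \<Rightarrow> 'a \<Rightarrow> 'b::boolean_algebra) \<Rightarrow> bool" where
  "bool_metric X d \<longleftrightarrow>
     (\<forall>x\<in>X. \<forall>y\<in>X. d x y = d y x) \<and>
     (\<forall>x\<in>X. \<forall>y\<in>X. d x y = bot \<longleftrightarrow> x = y) \<and>
     (\<forall>x\<in>X. \<forall>y\<in>X. \<forall>z\<in>X. d x z \<le> sup (d x y) (d y z))"

definition is_partition :: "nat \<Rightarrow> (nat \<Rightarrow> 'b::boolean_algebra) \<Rightarrow> bool" where
  "is_partition n a \<longleftrightarrow>
     (\<forall>i\<le>n. \<forall>j\<le>n. i \<noteq> j \<longrightarrow> inf (a i) (a j) = bot) \<and>
     Sup_fin (a ` {..n}) = top"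

definition convex_comb ::
  "('a \<Rightarrow> 'a \<Rightarrow> 'b::boolean_algebra) \<Rightarrow> 'a \<Rightarrow> nat \<Rightarrow> (nat \<Rightarrow> 'a) \<Rightarrow> (nat \<Rightarrow> 'b) \<Rightarrow> bool" where
  "convex_comb d x n xs a \<longleftrightarrow> (\<forall>i\<le>n. inf (a i) (d x (xs i)) = bot)"

definition bool_convex :: "'a set \<Rightarrow> ('a \<Rightarrow> 'a \<Rightarrow> 'b::boolean_algebra) \<Rightarrow> bool" where
  "bool_convex X d \<longleftrightarrow>
     (\<forall>n xs a. (\<forall>i\<le>n. xs i \<in> X) \<and> is_partition n a \<longrightarrow>
        (\<exists>x\<in>X. convex_comb d x n xs a))"

definition fin_generated :: "'a set \<Rightarrow> ('a \<Rightarrow> 'a \<Rightarrow> 'b::boolean_algebra) \<Rightarrow> bool" where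
  "fin_generated X d \<longleftrightarrow>
     (\<exists>S. finite S \<and> S \<subseteq> X \<and>
        (\<forall>x\<in>X. \<exists>n xs a. (\<forall>i\<le>n. xs i \<in> S) \<and> is_partition n a \<and> convex_comb d x n xs a))"

definition CFG_space :: "'a set \<Rightarrow> ('a \<Rightarrow> 'a \<Rightarrow> 'b::boolean_algebra) \<Rightarrow> bool" where
  "CFG_space X d \<longleftrightarrow> bool_metric X d \<and> bool_convex X d \<and> fin_generated X d"

definition bool_isometry ::
  "'a set \<Rightarrow> 'a set \<Rightarrow> ('a \<Rightarrow> 'a \<Rightarrow> 'b::boolean_algebra) \<Rightarrow> ('a \<Rightarrow> 'a) \<Rightarrow> bool" where
  "bool_isometry X Y d f \<longleftrightarrow> bij_betw f X Y \<and> (\<forall>x\<in>X. \<forall>y\<in>X. d (f x) (f y) = d x y)"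

end

theory Submission
  imports Defs
begin

lemma part_cover:
  fixes a :: "nat \<Rightarrow> 'b::boolean_algebra"
  assumes "is_partition n a" and "\<And>i. i \<le> n \<Longrightarrow> inf x (a i) = bot"
  shows "x = bot"
proof -
  have "Sup_fin (a ` {..n}) \<le> - x"
  proof (rule Sup_fin.boundedI)
    show "finite (a ` {..n})" by simp
    show "a ` {..n} \<noteq> {}" by simp
    fix y assume "y \<in> a ` {..n}"
    then obtain i where "i \<le> n" "y = a i" by auto
    then show "y \<le> - x" using assms(2)[of i] by (metis inf_shunt inf_commute)
  qed
  then have "top \<le> - x" using assms(1) unfolding is_partition_def by simp
  then show ?thesis by (metis compl_le_swap1 compl_top_eq bot_unique)
qed

lemma part2: "is_partition 1 (\<lambda>i. if i = 0 then c else - (c::'b::boolean_algebra))"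
proof -
  have "{..(1::nat)} = {0,1}" by auto
  then have "(\<lambda>i. if i = 0 then c else - c) ` {..(1::nat)} = {c, -c}" by auto
  moreover have "Sup_fin {c, -c} = top"
    by (simp add: sup_compl_top)
  moreover have "\<forall>i\<le>(1::nat). \<forall>j\<le>1. i \<noteq> j \<longrightarrow> inf ((\<lambda>i. if i = 0 then c else - c) i) ((\<lambda>i. if i = 0 then c else - c) j) = bot"
    using \<open>{..(1::nat)} = {0,1}\<close> by (auto simp: inf_compl_bot inf_commute)
  ultimately show ?thesis unfolding is_partition_def by simp
qed

lemma dec_lemma:
  fixes c :: "'b::boolean_algebra"
  assumes "c \<le> b \<or> c \<le> - b" and "inf c b = bot \<Longrightarrow> inf c X = bot"
  shows "inf (inf c (-b)) X = bot"
proof (cases "c \<le> - b")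
  case True
  then have "inf c b = bot" by (simp add: inf_shunt)
  then have "inf c X = bot" using assms(2) by simp
  then have "inf (- b) (inf c X) = bot" by simp
  then show ?thesis by (simp add: ac_simps)
next
  case False
  then have "c \<le> b" using assms(1) by simp
  then have "inf c (-b) = bot" by (simp add: inf_shunt)
  then show ?thesis by simp
qed

lemma join_lemma:
  fixes c1 :: "'b::boolean_algebra"
  assumes "inf c1 Y = bot" "inf (inf c2 (-c1)) Y = bot"
  shows "inf (sup c1 c2) Y = bot"
proof -
  have "Y \<le> - c1" using assms(1) by (simp add: inf_shunt inf_commute)
  then have "inf (-c1) Y = Y" by (simp add: inf.absorb2)
  then have "inf c2 Y = bot" using assms(2) by (metis inf.assoc)
  then show ?thesis using assms(1) by (simp add: inf_sup_distrib2)
qed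

lemma split_induct:
  fixes c :: "'b::boolean_algebra"
  assumes "finite P" and J: "\<And>x y. \<Phi> x \<Longrightarrow> \<Phi> y \<Longrightarrow> \<Phi> (sup x y)"
    and "\<And>c'. c' \<le> c \<Longrightarrow> (\<forall>b\<in>P. c' \<le> b \<or> c' \<le> -b) \<Longrightarrow> \<Phi> c'"
  shows "\<Phi> c"
  using assms(1,3)
proof (induction P arbitrary: c rule: finite_induct)
  case empty then show ?case by auto
next
  case (insert b P)
  have 1: "\<Phi> (inf c b)"
  proof (rule insert.IH)
    fix c' assume a: "c' \<le> inf c b" "\<forall>b\<in>P. c' \<le> b \<or> c' \<le> - b"
    then have "c' \<le> c" "c' \<le> b" by simp_all
    with a(2) show "\<Phi> c'" using insert.prems by blast
  qed
  have 2: "\<Phi> (inf c (-b))"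
  proof (rule insert.IH)
    fix c' assume a: "c' \<le> inf c (-b)" "\<forall>b\<in>P. c' \<le> b \<or> c' \<le> - b"
    then have "c' \<le> c" "c' \<le> -b" by simp_all
    with a(2) show "\<Phi> c'" using insert.prems by blast
  qed
  have "sup (inf c b) (inf c (-b)) = c"
    by (metis inf_sup_distrib1 sup_compl_top inf_top_right)
  with J[OF 1 2] show ?case by metis
qed

lemma ext_bij:
  assumes "finite Q" "A \<subseteq> Q" "inj_on h A" "h ` A \<subseteq> Q"
  shows "\<exists>\<pi>. bij_betw \<pi> Q Q \<and> (\<forall>x\<in>A. \<pi> x = h x)"
proof -
  have fA: "finite A" using assms finite_subset by blast
  have "card (Q - A) = card (Q - h ` A)"
    using assms fA by (simp add: card_Diff_subset card_image)
  then obtain k where k: "bij_betw k (Q - A) (Q - h ` A)"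
    using finite_same_card_bij[of "Q - A" "Q - h ` A"] assms(1) by auto
  define \<pi> where "\<pi> x = (if x \<in> A then h x else k x)" for x
  have b1: "bij_betw \<pi> A (h ` A)"
    using inj_on_imp_bij_betw[OF assms(3)] by (rule bij_betw_cong[THEN iffD1, rotated]) (simp add: \<pi>_def)
  have b2: "bij_betw \<pi> (Q - A) (Q - h ` A)"
    using k by (rule bij_betw_cong[THEN iffD1, rotated]) (auto simp: \<pi>_def)
  have "bij_betw \<pi> (A \<union> (Q - A)) (h ` A \<union> (Q - h ` A))"
    by (rule bij_betw_combine[OF b1 b2]) auto
  moreover have "A \<union> (Q - A) = Q" "h ` A \<union> (Q - h ` A) = Q" using assms by auto
  ultimately show ?thesis by (auto simp: \<pi>_def)
qed


lemma inf_compl_cong: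
  fixes e :: "'b::boolean_algebra"
  assumes "inf e A = inf e B"
  shows "inf e (-A) = inf e (-B)"
proof -
  have k: "inf e (-X) = inf e (-(inf e X))" for X :: 'b
    by (simp add: compl_inf inf_sup_distrib1)
  have "inf e (-A) = inf e (-(inf e A))" by (rule k)
  also have "\<dots> = inf e (-(inf e B))" by (simp only: assms)
  also have "\<dots> = inf e (-B)" by (rule k[symmetric])
  finally show ?thesis .
qed

locale bsp =
  fixes W :: "'a set" and d :: "'a \<Rightarrow> 'a \<Rightarrow> 'b::boolean_algebra" and G :: "'a set"
  assumes met: "bool_metric W d" and cvx: "bool_convex W d" and finG: "finite G" and GW: "G \<subseteq> W"
    and gen: "\<And>x. x \<in> W \<Longrightarrow> \<exists>n xs a. (\<forall>i\<le>n. xs i \<in> G) \<and> is_partition n a \<and> convex_comb d x n xs a"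
begin

lemma dsym: "x \<in> W \<Longrightarrow> y \<in> W \<Longrightarrow> d x y = d y x"
  using met unfolding bool_metric_def by blast

lemma deq: "x \<in> W \<Longrightarrow> y \<in> W \<Longrightarrow> d x y = bot \<longleftrightarrow> x = y"
  using met unfolding bool_metric_def by blast

lemma dself[simp]: "x \<in> W \<Longrightarrow> d x x = bot"
  using deq by blast

lemma tri: "x \<in> W \<Longrightarrow> y \<in> W \<Longrightarrow> z \<in> W \<Longrightarrow> d x z \<le> sup (d x y) (d y z)"
  using met unfolding bool_metric_def by blast

lemma cong_le:
  assumes W: "x \<in> W" "x' \<in> W" "y \<in> W" "y' \<in> W"
    and c: "inf e (d x x') = bot" "inf e (d y y') = bot"
  shows "inf e (d x y) \<le> inf e (d x' y')"
proof -
  have "d x y \<le> sup (d x x') (d x' y)" using tri W by blast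
  also have "\<dots> \<le> sup (d x x') (sup (d x' y') (d y y'))"
  proof (rule sup_mono[OF order_refl])
    have "d x' y \<le> sup (d x' y') (d y' y)" using tri W by blast
    then show "d x' y \<le> sup (d x' y') (d y y')" using dsym W by simp
  qed
  finally have "d x y \<le> sup (d x x') (sup (d x' y') (d y y'))" .
  then have "inf e (d x y) \<le> inf e (sup (d x x') (sup (d x' y') (d y y')))"
    by (rule inf_mono[OF order_refl])
  also have "\<dots> = sup (inf e (d x x')) (sup (inf e (d x' y')) (inf e (d y y')))"
    by (simp add: inf_sup_distrib1)
  also have "\<dots> = inf e (d x' y')" using c by simp
  finally show ?thesis .
qed

lemma dcong:
  assumes W: "x \<in> W" "x' \<in> W" "y \<in> W" "y' \<in> W"
    and c: "inf e (d x x') = bot" "inf e (d y y') = bot"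
  shows "inf e (d x y) = inf e (d x' y')"
proof (rule antisym)
  show "inf e (d x y) \<le> inf e (d x' y')" by (rule cong_le[OF W c])
  have c': "inf e (d x' x) = bot" "inf e (d y' y) = bot"
    using c dsym[OF W(1,2)] dsym[OF W(3,4)] by simp_all
  show "inf e (d x' y') \<le> inf e (d x y)" by (rule cong_le[OF W(2,1,4,3) c'])
qed

definition R where "R e p q p' q' \<longleftrightarrow> inf (inf e (-d p q)) (d p' q') = bot"

lemma R_mono: "e' \<le> e \<Longrightarrow> R e p q p' q' \<Longrightarrow> R e' p q p' q'"
proof -
  assume a: "e' \<le> e" "R e p q p' q'"
  have "inf (inf e' (-d p q)) (d p' q') \<le> inf (inf e (-d p q)) (d p' q')"
    using a(1) by (meson inf_mono order_refl)
  with a(2) show ?thesis unfolding R_def by (simp add: bot_unique)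
qed

lemma R_transfer:
  assumes W: "p \<in> W" "q \<in> W" "p' \<in> W" "q' \<in> W" "p1 \<in> W" "q1 \<in> W" "p1' \<in> W" "q1' \<in> W"
    and c: "inf e (d p p1) = bot" "inf e (d q q1) = bot" "inf e (d p' p1') = bot" "inf e (d q' q1') = bot"
    and r: "R e p1 q1 p1' q1'"
  shows "R e p q p' q'"
proof -
  have e1: "inf e (-d p q) = inf e (-d p1 q1)"
    by (rule inf_compl_cong, rule dcong[OF W(1,5,2,6) c(1,2)])
  have e2: "inf e (d p' q') = inf e (d p1' q1')"
    by (rule dcong[OF W(3,7,4,8) c(3,4)])
  have k: "inf (inf e X) Y = inf (inf e X) (inf e Y)" for X Y :: 'b
    by (simp add: inf_assoc inf_left_commute)
  have "inf (inf e (-d p q)) (d p' q') = inf (inf e (-d p q)) (inf e (d p' q'))" by (rule k)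
  also have "\<dots> = inf (inf e (-d p1 q1)) (inf e (d p1' q1'))" by (simp only: e1 e2)
  also have "\<dots> = inf (inf e (-d p1 q1)) (d p1' q1')" by (rule k[symmetric])
  finally show ?thesis using r unfolding R_def by simp
qed

lemma R_join: "R c1 p q p' q' \<Longrightarrow> R (inf c2 (-c1)) p q p' q' \<Longrightarrow> R (sup c1 c2) p q p' q'"
proof -
  assume a: "R c1 p q p' q'" and b: "R (inf c2 (-c1)) p q p' q'"
  let ?Y = "inf (-d p q) (d p' q')"
  have 1: "inf c1 ?Y = bot" using a unfolding R_def by (simp add: inf_assoc)
  have 2: "inf (inf c2 (-c1)) ?Y = bot" using b unfolding R_def by (simp add: inf_assoc)
  have "inf (sup c1 c2) ?Y = bot" by (rule join_lemma[OF 1 2])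
  then show ?thesis unfolding R_def by (simp add: inf_assoc)
qed

lemma cover:
  assumes "x \<in> W" and h: "\<And>s. s \<in> G \<Longrightarrow> inf e (-d x s) = bot"
  shows "e = bot"
proof -
  obtain n xs a where xs: "\<forall>i\<le>n. xs i \<in> G" and p: "is_partition n a" and cc: "convex_comb d x n xs a"
    using gen[OF assms(1)] by blast
  show ?thesis
  proof (rule part_cover[OF p])
    fix i assume i: "i \<le> n"
    have "a i \<le> -d x (xs i)" using cc i unfolding convex_comb_def by (simp add: inf_shunt)
    then have "inf e (a i) \<le> inf e (-d x (xs i))" by (rule inf_mono[OF order_refl])
    then show "inf e (a i) = bot" using h[of "xs i"] xs i by (simp add: bot_unique)
  qed
qed

lemma comb2:
  assumes "x \<in> W" "y \<in> W"
  shows "\<exists>z\<in>W. inf c (d z x) = bot \<and> inf (-c) (d z y) = bot"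
proof -
  let ?xs = "\<lambda>i::nat. if i = 0 then x else y"
  let ?a = "\<lambda>i::nat. if i = 0 then c else -c"
  have "\<forall>i\<le>1. ?xs i \<in> W" using assms by auto
  then obtain z where z: "z \<in> W" "convex_comb d z 1 ?xs ?a"
    using cvx[unfolded bool_convex_def, rule_format, of 1 ?xs ?a] part2[of c] by blast
  have "inf (?a 0) (d z (?xs 0)) = bot" "inf (?a 1) (d z (?xs 1)) = bot"
    using z(2) unfolding convex_comb_def by blast+
  then have "inf c (d z x) = bot" "inf (-c) (d z y) = bot" by simp_all
  with z show ?thesis by blast
qed


lemma R_join2:
  assumes W: "p \<in> W" "q \<in> W" "p' \<in> W" "q' \<in> W"
    and W1: "p1 \<in> W" "q1 \<in> W" "p1' \<in> W" "q1' \<in> W"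
    and W2: "p2 \<in> W" "q2 \<in> W" "p2' \<in> W" "q2' \<in> W"
    and a: "inf c1 (d p p1) = bot" "inf c1 (d q q1) = bot" "inf c1 (d p' p1') = bot" "inf c1 (d q' q1') = bot"
    and b: "inf (inf c2 (-c1)) (d p p2) = bot" "inf (inf c2 (-c1)) (d q q2) = bot"
      "inf (inf c2 (-c1)) (d p' p2') = bot" "inf (inf c2 (-c1)) (d q' q2') = bot"
    and r1: "R c1 p1 q1 p1' q1'" and r2: "R c2 p2 q2 p2' q2'"
  shows "R (sup c1 c2) p q p' q'"
proof (rule R_join)
  show "R c1 p q p' q'" by (rule R_transfer[OF W W1 a r1])
  have "R (inf c2 (-c1)) p2 q2 p2' q2'" by (rule R_mono[OF inf_le1 r2])
  then show "R (inf c2 (-c1)) p q p' q'" by (rule R_transfer[OF W W2 b])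
qed

lemma close_self: "x \<in> W \<Longrightarrow> inf e (d x x) = bot"
  by simp

lemma close_sub: "inf (-c1) X = bot \<Longrightarrow> inf (inf c2 (-c1)) X = (bot::'b)"
  by (simp add: inf_assoc)

definition good :: "'a set \<Rightarrow> ('a \<Rightarrow> 'a) \<Rightarrow> 'b \<Rightarrow> ('a \<Rightarrow> 'a) \<Rightarrow> ('a \<Rightarrow> 'a) \<Rightarrow> bool" where
  "good SU F c f g \<longleftrightarrow> (\<forall>s\<in>G. f s \<in> W \<and> g s \<in> W) \<and>
     (\<forall>s\<in>G. \<forall>s'\<in>G. R c s s' (f s) (f s') \<and> R c (f s) (f s') s s' \<and> R c (g s) s' (f s') s) \<and>
     (\<forall>u\<in>SU. \<forall>s\<in>G. R c u s (F u) (f s))"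

lemma good_join:
  assumes SU: "SU \<subseteq> W" "F ` SU \<subseteq> W"
    and g1: "good SU F c1 f1 g1" and g2: "good SU F c2 f2 g2"
  shows "\<exists>f g. good SU F (sup c1 c2) f g"
proof -
  define f where "f s = (SOME z. z \<in> W \<and> inf c1 (d z (f1 s)) = bot \<and> inf (-c1) (d z (f2 s)) = bot)" for s
  define g where "g s = (SOME z. z \<in> W \<and> inf c1 (d z (g1 s)) = bot \<and> inf (-c1) (d z (g2 s)) = bot)" for s
  have f1W: "f1 s \<in> W" "g1 s \<in> W" "f2 s \<in> W" "g2 s \<in> W" if "s \<in> G" for s
    using g1 g2 that unfolding good_def by auto
  have fp: "f s \<in> W \<and> inf c1 (d (f s) (f1 s)) = bot \<and> inf (-c1) (d (f s) (f2 s)) = bot" if "s \<in> G" for s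
  proof -
    have "\<exists>z. z \<in> W \<and> inf c1 (d z (f1 s)) = bot \<and> inf (-c1) (d z (f2 s)) = bot"
      using comb2[OF f1W(1,3)[OF that], of c1] by blast
    then show ?thesis unfolding f_def by (rule someI_ex)
  qed
  have gp: "g s \<in> W \<and> inf c1 (d (g s) (g1 s)) = bot \<and> inf (-c1) (d (g s) (g2 s)) = bot" if "s \<in> G" for s
  proof -
    have "\<exists>z. z \<in> W \<and> inf c1 (d z (g1 s)) = bot \<and> inf (-c1) (d z (g2 s)) = bot"
      using comb2[OF f1W(2,4)[OF that], of c1] by blast
    then show ?thesis unfolding g_def by (rule someI_ex)
  qed
  have fW: "f s \<in> W" "g s \<in> W" if "s \<in> G" for s using fp gp that by auto
  have fc1: "inf c1 (d (f s) (f1 s)) = bot" "inf c1 (d (g s) (g1 s)) = bot" if "s \<in> G" for s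
    using fp gp that by auto
  have fc2: "inf (inf c2 (-c1)) (d (f s) (f2 s)) = bot" "inf (inf c2 (-c1)) (d (g s) (g2 s)) = bot"
    if "s \<in> G" for s using fp gp that close_sub by blast+
  have sW: "s \<in> W" if "s \<in> G" for s using GW that by auto
  have R1: "R c1 s s' (f1 s) (f1 s') \<and> R c1 (f1 s) (f1 s') s s' \<and> R c1 (g1 s) s' (f1 s') s"
    "R c2 s s' (f2 s) (f2 s') \<and> R c2 (f2 s) (f2 s') s s' \<and> R c2 (g2 s) s' (f2 s') s"
    if "s \<in> G" "s' \<in> G" for s s'
    using g1 g2 that unfolding good_def by blast+
  have R4: "R c1 u s (F u) (f1 s)" "R c2 u s (F u) (f2 s)" if "u \<in> SU" "s \<in> G" for u s
    using g1 g2 that unfolding good_def by blast+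
  have "good SU F (sup c1 c2) f g"
    unfolding good_def
  proof (intro conjI ballI)
    fix s assume s: "s \<in> G"
    show "f s \<in> W" "g s \<in> W" using fW s by auto
  next
    fix s s' assume s: "s \<in> G" and s': "s' \<in> G"
    show "R (sup c1 c2) s s' (f s) (f s')"
      by (rule R_join2[OF sW[OF s] sW[OF s'] fW(1)[OF s] fW(1)[OF s']
            sW[OF s] sW[OF s'] f1W(1)[OF s] f1W(1)[OF s'] sW[OF s] sW[OF s'] f1W(3)[OF s] f1W(3)[OF s']
            close_self[OF sW[OF s]] close_self[OF sW[OF s']] fc1(1)[OF s] fc1(1)[OF s']
            close_self[OF sW[OF s]] close_self[OF sW[OF s']] fc2(1)[OF s] fc2(1)[OF s']])
        (use R1[OF s s'] in auto)
    show "R (sup c1 c2) (f s) (f s') s s'"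
      by (rule R_join2[OF fW(1)[OF s] fW(1)[OF s'] sW[OF s] sW[OF s']
            f1W(1)[OF s] f1W(1)[OF s'] sW[OF s] sW[OF s'] f1W(3)[OF s] f1W(3)[OF s'] sW[OF s] sW[OF s']
            fc1(1)[OF s] fc1(1)[OF s'] close_self[OF sW[OF s]] close_self[OF sW[OF s']]
            fc2(1)[OF s] fc2(1)[OF s'] close_self[OF sW[OF s]] close_self[OF sW[OF s']]])
        (use R1[OF s s'] in auto)
    show "R (sup c1 c2) (g s) s' (f s') s"
      by (rule R_join2[OF fW(2)[OF s] sW[OF s'] fW(1)[OF s'] sW[OF s]
            f1W(2)[OF s] sW[OF s'] f1W(1)[OF s'] sW[OF s] f1W(4)[OF s] sW[OF s'] f1W(3)[OF s'] sW[OF s]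
            fc1(2)[OF s] close_self[OF sW[OF s']] fc1(1)[OF s'] close_self[OF sW[OF s]]
            fc2(2)[OF s] close_self[OF sW[OF s']] fc2(1)[OF s'] close_self[OF sW[OF s]]])
        (use R1[OF s s'] in auto)
  next
    fix u s assume u: "u \<in> SU" and s: "s \<in> G"
    have uW: "u \<in> W" "F u \<in> W" using u SU by auto
    show "R (sup c1 c2) u s (F u) (f s)"
      by (rule R_join2[OF uW(1) sW[OF s] uW(2) fW(1)[OF s] uW(1) sW[OF s] uW(2) f1W(1)[OF s]
            uW(1) sW[OF s] uW(2) f1W(3)[OF s]
            close_self[OF uW(1)] close_self[OF sW[OF s]] close_self[OF uW(2)] fc1(1)[OF s]
            close_self[OF uW(1)] close_self[OF sW[OF s]] close_self[OF uW(2)] fc2(1)[OF s]])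
        (use R4[OF u s] in auto)
  qed
  then show ?thesis by blast
qed


lemma local_step:
  assumes SU: "SU \<subseteq> W" "F ` SU \<subseteq> W"
    and iso: "\<And>u u'. u \<in> SU \<Longrightarrow> u' \<in> SU \<Longrightarrow> d (F u) (F u') = d u u'"
    and dec: "\<And>x y. x \<in> G \<union> SU \<union> F ` SU \<Longrightarrow> y \<in> G \<union> SU \<union> F ` SU \<Longrightarrow> c \<le> d x y \<or> c \<le> - d x y"
  shows "\<exists>f g. good SU F c f g"
proof (cases "c = bot")
  case True
  have "good SU F c id id" unfolding good_def R_def using True GW by auto
  then show ?thesis by blast
next
  case False
  define T where "T = G \<union> SU \<union> F ` SU"
  have TW: "T \<subseteq> W" using SU GW unfolding T_def by auto
  define E where "E x y \<longleftrightarrow> inf c (d x y) = bot" for x y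
  define cls where "cls x = {s\<in>G. E x s}" for x
  have Esym: "E x y \<Longrightarrow> E y x" if "x \<in> W" "y \<in> W" for x y
    using dsym[OF that] unfolding E_def by simp
  have Etrans: "E x y \<Longrightarrow> E y z \<Longrightarrow> E x z" if "x \<in> W" "y \<in> W" "z \<in> W" for x y z
  proof -
    assume a: "E x y" "E y z"
    have "inf c (d x z) \<le> inf c (sup (d x y) (d y z))"
      using tri[OF that] by (rule inf_mono[OF order_refl])
    also have "\<dots> = bot" using a unfolding E_def by (simp add: inf_sup_distrib1)
    finally show "E x z" unfolding E_def by (simp add: bot_unique)
  qed
  have Tex: "\<exists>s\<in>G. E x s" if x: "x \<in> T" for x
  proof (rule ccontr)
    assume "\<not> (\<exists>s\<in>G. E x s)"
    then have "inf c (- d x s) = bot" if "s \<in> G" for s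
    proof -
      have "c \<le> d x s \<or> c \<le> - d x s" using dec x that unfolding T_def by blast
      moreover have "\<not> c \<le> - d x s" using \<open>\<not> (\<exists>s\<in>G. E x s)\<close> that unfolding E_def
        by (simp add: inf_shunt)
      ultimately show ?thesis by (simp add: inf_shunt)
    qed
    then have "c = bot" using cover[of x c] x TW by blast
    with False show False by simp
  qed
  have clsE: "cls x = cls y \<longleftrightarrow> E x y" if x: "x \<in> T" and y: "y \<in> T" for x y
  proof
    assume e: "cls x = cls y"
    obtain s where s: "s \<in> G" "E x s" using Tex[OF x] by blast
    then have "s \<in> cls y" using e unfolding cls_def by auto
    then have "E y s" unfolding cls_def by auto
    then show "E x y" using Etrans[of x s y] Esym[of y s] s x y TW GW by blast
  next
    assume e: "E x y"
    show "cls x = cls y" unfolding cls_def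
    proof (intro Collect_cong conj_cong refl iffI)
      fix s assume "s \<in> G" "E x s"
      then show "E y s" using Etrans[of y x s] Esym[of x y] e x y TW GW by blast
    next
      fix s assume "s \<in> G" "E y s"
      then show "E x s" using Etrans[of x y s] e x y TW GW by blast
    qed
  qed
  have GT: "G \<subseteq> T" "SU \<subseteq> T" "F ` SU \<subseteq> T" unfolding T_def by auto
  define Q where "Q = cls ` G"
  define A where "A = cls ` SU"
  define h where "h C = cls (F (SOME u. u \<in> SU \<and> cls u = C))" for C
  have EF: "E (F u) (F u') \<longleftrightarrow> E u u'" if "u \<in> SU" "u' \<in> SU" for u u'
    unfolding E_def using iso[OF that] by simp
  have hU: "h (cls u) = cls (F u)" if u: "u \<in> SU" for u
  proof -
    define u' where "u' = (SOME v. v \<in> SU \<and> cls v = cls u)"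
    have "u' \<in> SU \<and> cls u' = cls u" unfolding u'_def by (rule someI[of _ u]) (use u in auto)
    then have "u' \<in> SU" "E u' u" using clsE u GT by auto
    then have "E (F u') (F u)" using EF u by blast
    then have "cls (F u') = cls (F u)" using clsE \<open>u' \<in> SU\<close> u GT by blast
    then show ?thesis unfolding h_def u'_def by simp
  qed
  have clsG: "\<exists>s\<in>G. cls x = cls s" if xT: "x \<in> T" for x
  proof -
    obtain s where "s \<in> G" "E x s" using Tex[OF xT] by blast
    then show ?thesis using clsE xT GT by blast
  qed
  have AQ: "A \<subseteq> Q" unfolding A_def Q_def using clsG GT by blast
  have hAQ: "h ` A \<subseteq> Q" unfolding A_def Q_def using clsG GT hU by (auto simp: image_iff)
  have injh: "inj_on h A"
  proof (rule inj_onI)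
    fix C1 C2 assume "C1 \<in> A" "C2 \<in> A" and e: "h C1 = h C2"
    then obtain u1 u2 where u: "u1 \<in> SU" "u2 \<in> SU" "C1 = cls u1" "C2 = cls u2" unfolding A_def by blast
    then have "cls (F u1) = cls (F u2)" using e hU by simp
    then have "E (F u1) (F u2)" using clsE u GT by blast
    then have "E u1 u2" using EF u by blast
    then show "C1 = C2" using clsE u GT by blast
  qed
  have fQ: "finite Q" unfolding Q_def using finG by simp
  obtain \<pi> where pi: "bij_betw \<pi> Q Q" "\<And>C. C \<in> A \<Longrightarrow> \<pi> C = h C"
    using ext_bij[OF fQ AQ injh hAQ] by blast
  have piQ: "\<pi> C \<in> Q" if "C \<in> Q" for C using pi(1) that by (auto simp: bij_betw_def)
  have piinj: "inj_on \<pi> Q" using pi(1) by (simp add: bij_betw_def)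
  have pisurj: "\<pi> ` Q = Q" using pi(1) by (simp add: bij_betw_def)
  define f where "f s = (SOME s'. s' \<in> G \<and> cls s' = \<pi> (cls s))" for s
  define g where "g s = (SOME s'. s' \<in> G \<and> \<pi> (cls s') = cls s)" for s
  have fG: "f s \<in> G \<and> cls (f s) = \<pi> (cls s)" if s: "s \<in> G" for s
  proof -
    have "\<pi> (cls s) \<in> Q" using piQ s unfolding Q_def by auto
    then have "\<exists>s'. s' \<in> G \<and> cls s' = \<pi> (cls s)" unfolding Q_def by auto
    then show ?thesis unfolding f_def by (rule someI_ex)
  qed
  have gG: "g s \<in> G \<and> \<pi> (cls (g s)) = cls s" if s: "s \<in> G" for s
  proof -
    have "cls s \<in> \<pi> ` Q" using pisurj s unfolding Q_def by auto
    then have "\<exists>s'. s' \<in> G \<and> \<pi> (cls s') = cls s" unfolding Q_def by auto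
    then show ?thesis unfolding g_def by (rule someI_ex)
  qed
  have decT: "c \<le> d x y \<or> c \<le> - d x y" if "x \<in> T" "y \<in> T" for x y
    using dec that unfolding T_def by blast
  have "good SU F c f g"
    unfolding good_def R_def
  proof (intro conjI ballI)
    fix s assume s: "s \<in> G"
    show "f s \<in> W" "g s \<in> W" using fG gG s GW by auto
  next
    fix s s' assume s: "s \<in> G" and s': "s' \<in> G"
    have fs: "f s \<in> G" "f s' \<in> G" "g s \<in> G" using fG gG s s' by auto
    have cs: "cls s \<in> Q" "cls s' \<in> Q" using s s' unfolding Q_def by auto
    show "inf (inf c (- d s s')) (d (f s) (f s')) = bot"
    proof (rule dec_lemma)
      show "c \<le> d s s' \<or> c \<le> - d s s'" using decT s s' GT by blast
      assume "inf c (d s s') = bot"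
      then have "E s s'" unfolding E_def .
      then have "cls s = cls s'" using clsE s s' GT by blast
      then have "cls (f s) = cls (f s')" using fG s s' by simp
      then have "E (f s) (f s')" using clsE fs GT by blast
      then show "inf c (d (f s) (f s')) = bot" unfolding E_def .
    qed
    show "inf (inf c (- d (f s) (f s'))) (d s s') = bot"
    proof (rule dec_lemma)
      show "c \<le> d (f s) (f s') \<or> c \<le> - d (f s) (f s')" using decT fs GT by blast
      assume "inf c (d (f s) (f s')) = bot"
      then have "E (f s) (f s')" unfolding E_def .
      then have "cls (f s) = cls (f s')" using clsE fs GT by blast
      then have "\<pi> (cls s) = \<pi> (cls s')" using fG s s' by simp
      then have "cls s = cls s'" using piinj cs by (simp add: inj_on_def)
      then have "E s s'" using clsE s s' GT by blast
      then show "inf c (d s s') = bot" unfolding E_def .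
    qed
    show "inf (inf c (- d (g s) s')) (d (f s') s) = bot"
    proof (rule dec_lemma)
      show "c \<le> d (g s) s' \<or> c \<le> - d (g s) s'" using decT fs s' GT by blast
      assume "inf c (d (g s) s') = bot"
      then have "E (g s) s'" unfolding E_def .
      then have "cls (g s) = cls s'" using clsE fs s' GT by blast
      then have "cls (f s') = cls s" using fG[OF s'] gG[OF s] by simp
      then have "E (f s') s" using clsE fs s GT by blast
      then show "inf c (d (f s') s) = bot" unfolding E_def .
    qed
  next
    fix u s assume u: "u \<in> SU" and s: "s \<in> G"
    have fs: "f s \<in> G" using fG s by auto
    show "inf (inf c (- d u s)) (d (F u) (f s)) = bot"
    proof (rule dec_lemma)
      show "c \<le> d u s \<or> c \<le> - d u s" using decT u s GT by blast
      assume "inf c (d u s) = bot"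
      then have "E u s" unfolding E_def .
      then have "cls u = cls s" using clsE u s GT by blast
      moreover have "\<pi> (cls u) = h (cls u)" using pi(2) u unfolding A_def by blast
      ultimately have "cls (f s) = h (cls u)" using fG[OF s] by simp
      then have "cls (F u) = cls (f s)" using hU u by simp
      then have "E (F u) (f s)" using clsE u fs GT by blast
      then show "inf c (d (F u) (f s)) = bot" unfolding E_def .
    qed
  qed
  then show ?thesis by blast
qed


lemma main:
  assumes fin: "finite SU" and SU: "SU \<subseteq> W" "F ` SU \<subseteq> W"
    and iso: "\<And>u u'. u \<in> SU \<Longrightarrow> u' \<in> SU \<Longrightarrow> d (F u) (F u') = d u u'"
  shows "\<exists>f g. good SU F top f g"
proof -
  let ?T = "G \<union> SU \<union> F ` SU"
  have "finite ((\<lambda>(x,y). d x y) ` (?T \<times> ?T))" using finG fin by simp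
  then show ?thesis
  proof (rule split_induct[where \<Phi> = "\<lambda>c. \<exists>f g. good SU F c f g"])
    show "\<exists>f g. good SU F (sup x y) f g" if "\<exists>f g. good SU F x f g" "\<exists>f g. good SU F y f g" for x y
      using that good_join[OF SU] by blast
  next
    fix c' assume dec: "\<forall>b\<in>(\<lambda>(x,y). d x y) ` (?T \<times> ?T). c' \<le> b \<or> c' \<le> - b"
    show "\<exists>f g. good SU F c' f g"
    proof (rule local_step[OF SU iso])
      fix x y assume "x \<in> ?T" "y \<in> ?T"
      then have "d x y \<in> (\<lambda>(x,y). d x y) ` (?T \<times> ?T)" by (intro image_eqI[where x="(x,y)"]) auto
      then show "c' \<le> d x y \<or> c' \<le> - d x y" using dec by blast
    qed auto
  qed
qed

lemma hlp1: "inf (inf (-A) B) A = (bot::'b)"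
proof -
  have "inf (inf (-A) B) A \<le> inf (-A) A" by (rule inf_mono) simp_all
  then show ?thesis by (simp add: bot_unique)
qed

lemma hlp2: "inf (inf B (-A)) A = (bot::'b)"
proof -
  have "inf (inf B (-A)) A \<le> inf (-A) A" by (rule inf_mono) simp_all
  then show ?thesis by (simp add: bot_unique)
qed

lemma global:
  assumes UW: "U \<subseteq> W" and FU: "F ` U \<subseteq> W"
    and isoU: "\<And>u u'. u \<in> U \<Longrightarrow> u' \<in> U \<Longrightarrow> d (F u) (F u') = d u u'"
    and fin: "finite SU" and SUU: "SU \<subseteq> U"
    and genU: "\<And>u. u \<in> U \<Longrightarrow> \<exists>n xs a. (\<forall>i\<le>n. xs i \<in> SU) \<and> is_partition n a \<and> convex_comb d u n xs a"
  shows "\<exists>F'. bool_isometry W W d F' \<and> (\<forall>x\<in>U. F' x = F x)"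
proof -
  have SU: "SU \<subseteq> W" "F ` SU \<subseteq> W" using SUU UW FU by auto
  obtain f g where gd: "good SU F top f g"
    using main[OF fin SU] isoU SUU by blast
  have fW: "f s \<in> W" "g s \<in> W" if "s \<in> G" for s using gd that unfolding good_def by auto
  have I1: "R e s s' (f s) (f s')" "R e (f s) (f s') s s'" "R e (g s) s' (f s') s"
    if "s \<in> G" "s' \<in> G" for s s' e
    using gd that R_mono[OF top_greatest] unfolding good_def by blast+
  have I4: "R e u s (F u) (f s)" if "u \<in> SU" "s \<in> G" for u s e
    using gd that R_mono[OF top_greatest] unfolding good_def by blast
  have sW: "s \<in> W" if "s \<in> G" for s using GW that by auto
  define chr where "chr w z \<longleftrightarrow> z \<in> W \<and> (\<forall>s\<in>G. inf (-d w s) (d z (f s)) = bot)" for w z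
  have uniq: "z1 = z2" if w: "w \<in> W" and c: "chr w z1" "chr w z2" for w z1 z2
  proof -
    have zW: "z1 \<in> W" "z2 \<in> W" using c unfolding chr_def by auto
    have "d z1 z2 = bot"
    proof (rule cover[OF w])
      fix s assume s: "s \<in> G"
      have a: "inf (-d w s) (d z1 (f s)) = bot" "inf (-d w s) (d z2 (f s)) = bot"
        using c s unfolding chr_def by auto
      have "inf (-d w s) (d z1 z2) = inf (-d w s) (d (f s) (f s))"
        by (rule dcong[OF zW(1) fW(1)[OF s] zW(2) fW(1)[OF s] a])
      then show "inf (d z1 z2) (- d w s) = bot" using fW(1)[OF s] by (simp add: inf_commute)
    qed
    then show ?thesis using deq zW by blast
  qed
  have ex: "\<exists>z. chr w z" if w: "w \<in> W" for w
  proof -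
    obtain n xs a where xs: "\<forall>i\<le>n. xs i \<in> G" and p: "is_partition n a" and cc: "convex_comb d w n xs a"
      using gen[OF w] by blast
    have "\<forall>i\<le>n. f (xs i) \<in> W" using xs fW by blast
    then obtain z where z: "z \<in> W" "convex_comb d z n (\<lambda>i. f (xs i)) a"
      using cvx[unfolded bool_convex_def, rule_format, of n "\<lambda>i. f (xs i)" a] p by blast
    have "chr w z" unfolding chr_def
    proof (intro conjI ballI z(1))
      fix s assume s: "s \<in> G"
      show "inf (-d w s) (d z (f s)) = bot"
      proof (rule part_cover[OF p])
        fix i assume i: "i \<le> n"
        have xi: "xs i \<in> G" using xs i by auto
        have c1: "inf (a i) (d w (xs i)) = bot" "inf (a i) (d z (f (xs i))) = bot"
          using cc z(2) i unfolding convex_comb_def by auto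
        have "R (a i) w s z (f s)"
          by (rule R_transfer[OF w sW[OF s] z(1) fW(1)[OF s] sW[OF xi] sW[OF s] fW(1)[OF xi] fW(1)[OF s]
                c1(1) close_self[OF sW[OF s]] c1(2) close_self[OF fW(1)[OF s]] I1(1)[OF xi s]])
        then show "inf (inf (-d w s) (d z (f s))) (a i) = bot"
          unfolding R_def by (simp add: ac_simps)
      qed
    qed
    then show ?thesis by blast
  qed
  define Fp where "Fp w = (THE z. chr w z)" for w
  have chrFp: "chr w (Fp w)" if "w \<in> W" for w
    unfolding Fp_def by (rule theI') (use ex[OF that] uniq[OF that] in blast)
  have FpW: "Fp w \<in> W" if "w \<in> W" for w using chrFp[OF that] unfolding chr_def by auto
  have Fpc: "inf (-d w s) (d (Fp w) (f s)) = bot" if "w \<in> W" "s \<in> G" for w s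
    using chrFp[OF that(1)] that(2) unfolding chr_def by auto
  have isoFp: "d (Fp w) (Fp w') = d w w'" if w: "w \<in> W" "w' \<in> W" for w w'
  proof -
    let ?z = "Fp w" and ?z' = "Fp w'"
    have zW: "?z \<in> W" "?z' \<in> W" using FpW w by auto
    have key: "R (inf (-d w s) (-d w' s')) w w' ?z ?z' \<and> R (inf (-d w s) (-d w' s')) ?z ?z' w w'"
      if s: "s \<in> G" "s' \<in> G" for s s'
    proof -
      let ?e = "inf (-d w s) (-d w' s')"
      have c1: "inf ?e (d w s) = bot" by (rule hlp1)
      have c2: "inf ?e (d w' s') = bot" by (rule hlp2)
      have "inf ?e (d ?z (f s)) \<le> inf (-d w s) (d ?z (f s))" by (rule inf_mono) simp_all
      then have c3: "inf ?e (d ?z (f s)) = bot" using Fpc[OF w(1) s(1)] by (simp add: bot_unique)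
      have "inf ?e (d ?z' (f s')) \<le> inf (-d w' s') (d ?z' (f s'))" by (rule inf_mono) simp_all
      then have c4: "inf ?e (d ?z' (f s')) = bot" using Fpc[OF w(2) s(2)] by (simp add: bot_unique)
      show ?thesis
      proof
        show "R ?e w w' ?z ?z'"
          by (rule R_transfer[OF w zW sW[OF s(1)] sW[OF s(2)] fW(1)[OF s(1)] fW(1)[OF s(2)]
                c1 c2 c3 c4 I1(1)[OF s]])
        show "R ?e ?z ?z' w w'"
          by (rule R_transfer[OF zW w fW(1)[OF s(1)] fW(1)[OF s(2)] sW[OF s(1)] sW[OF s(2)]
                c3 c4 c1 c2 I1(2)[OF s]])
      qed
    qed
    have h1: "inf (d ?z ?z') (-d w w') = bot"
    proof (rule cover[OF w(1)])
      fix s assume s: "s \<in> G"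
      show "inf (inf (d ?z ?z') (-d w w')) (-d w s) = bot"
      proof (rule cover[OF w(2)])
        fix s' assume s': "s' \<in> G"
        show "inf (inf (inf (d ?z ?z') (-d w w')) (-d w s)) (-d w' s') = bot"
          using key[OF s s'] unfolding R_def by (simp add: ac_simps)
      qed
    qed
    have h2: "inf (d w w') (-d ?z ?z') = bot"
    proof (rule cover[OF w(1)])
      fix s assume s: "s \<in> G"
      show "inf (inf (d w w') (-d ?z ?z')) (-d w s) = bot"
      proof (rule cover[OF w(2)])
        fix s' assume s': "s' \<in> G"
        show "inf (inf (inf (d w w') (-d ?z ?z')) (-d w s)) (-d w' s') = bot"
          using key[OF s s'] unfolding R_def by (simp add: ac_simps)
      qed
    qed
    from h1 h2 show ?thesis by (simp add: inf_shunt antisym)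
  qed
  have surj: "\<exists>y\<in>W. Fp y = z" if z: "z \<in> W" for z
  proof -
    obtain n xs a where xs: "\<forall>i\<le>n. xs i \<in> G" and p: "is_partition n a" and cc: "convex_comb d z n xs a"
      using gen[OF z] by blast
    have "\<forall>i\<le>n. g (xs i) \<in> W" using xs fW by blast
    then obtain y where y: "y \<in> W" "convex_comb d y n (\<lambda>i. g (xs i)) a"
      using cvx[unfolded bool_convex_def, rule_format, of n "\<lambda>i. g (xs i)" a] p by blast
    have "chr y z" unfolding chr_def
    proof (intro conjI ballI z)
      fix s' assume s': "s' \<in> G"
      show "inf (-d y s') (d z (f s')) = bot"
      proof (rule part_cover[OF p])
        fix i assume i: "i \<le> n"
        have xi: "xs i \<in> G" using xs i by auto
        have c1: "inf (a i) (d y (g (xs i))) = bot" "inf (a i) (d z (xs i)) = bot"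
          using cc y(2) i unfolding convex_comb_def by auto
        have "R (a i) y s' (f s') z"
          by (rule R_transfer[OF y(1) sW[OF s'] fW(1)[OF s'] z fW(2)[OF xi] sW[OF s'] fW(1)[OF s'] sW[OF xi]
                c1(1) close_self[OF sW[OF s']] close_self[OF fW(1)[OF s']] c1(2) I1(3)[OF xi s']])
        then show "inf (inf (-d y s') (d z (f s'))) (a i) = bot"
          unfolding R_def using dsym[OF z fW(1)[OF s']] by (simp add: ac_simps)
      qed
    qed
    then have "Fp y = z" using uniq[OF y(1) chrFp[OF y(1)]] by blast
    with y show ?thesis by blast
  qed
  have bij: "bij_betw Fp W W"
    unfolding bij_betw_def
  proof
    show "inj_on Fp W"
    proof (rule inj_onI)
      fix w w' assume w: "w \<in> W" "w' \<in> W" and e: "Fp w = Fp w'"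
      have "d w w' = d (Fp w) (Fp w')" using isoFp[OF w] by simp
      also have "\<dots> = bot" using e FpW[OF w(2)] by simp
      finally show "w = w'" using deq w by blast
    qed
    show "Fp ` W = W" using FpW surj by blast
  qed
  have ext: "Fp u = F u" if u: "u \<in> U" for u
  proof -
    have uW: "u \<in> W" "F u \<in> W" using u UW FU by auto
    obtain n xs a where xs: "\<forall>i\<le>n. xs i \<in> SU" and p: "is_partition n a" and cc: "convex_comb d u n xs a"
      using genU[OF u] by blast
    have "chr u (F u)" unfolding chr_def
    proof (intro conjI ballI uW(2))
      fix s assume s: "s \<in> G"
      show "inf (-d u s) (d (F u) (f s)) = bot"
      proof (rule part_cover[OF p])
        fix i assume i: "i \<le> n"
        have xi: "xs i \<in> SU" "xs i \<in> U" using xs i SUU by auto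
        have xW: "xs i \<in> W" "F (xs i) \<in> W" using xi UW FU by auto
        have c1: "inf (a i) (d u (xs i)) = bot" using cc i unfolding convex_comb_def by auto
        have c2: "inf (a i) (d (F u) (F (xs i))) = bot" using c1 isoU[OF u xi(2)] by simp
        have "R (a i) u s (F u) (f s)"
          by (rule R_transfer[OF uW(1) sW[OF s] uW(2) fW(1)[OF s] xW(1) sW[OF s] xW(2) fW(1)[OF s]
                c1 close_self[OF sW[OF s]] c2 close_self[OF fW(1)[OF s]] I4[OF xi(1) s]])
        then show "inf (inf (-d u s) (d (F u) (f s))) (a i) = bot"
          unfolding R_def by (simp add: ac_simps)
      qed
    qed
    then show ?thesis using uniq[OF uW(1) chrFp[OF uW(1)]] by blast
  qed
  have "bool_isometry W W d Fp" unfolding bool_isometry_def using bij isoFp by blast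
  with ext show ?thesis by blast
qed

end

theorem theorem2:
  fixes U V W :: "'a set" and d :: "'a \<Rightarrow> 'a \<Rightarrow> 'b::boolean_algebra" and F :: "'a \<Rightarrow> 'a"
  assumes "CFG_space W d" and "CFG_space U d" and "CFG_space V d"
    and "U \<subseteq> W" and "V \<subseteq> W"
    and "bool_isometry U V d F"
  shows "\<exists>F'. bool_isometry W W d F' \<and> (\<forall>x\<in>U. F' x = F x)"
proof -
  obtain G where G: "finite G" "G \<subseteq> W"
    "\<forall>x\<in>W. \<exists>n xs a. (\<forall>i\<le>n. xs i \<in> G) \<and> is_partition n a \<and> convex_comb d x n xs a"
    using assms(1) unfolding CFG_space_def fin_generated_def by blast
  obtain SU where SU: "finite SU" "SU \<subseteq> U"
    "\<forall>x\<in>U. \<exists>n xs a. (\<forall>i\<le>n. xs i \<in> SU) \<and> is_partition n a \<and> convex_comb d x n xs a"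
    using assms(2) unfolding CFG_space_def fin_generated_def by blast
  interpret bsp W d G
    using assms(1) G unfolding CFG_space_def by unfold_locales blast+
  have FU: "F ` U \<subseteq> W" using assms(5,6) unfolding bool_isometry_def bij_betw_def by blast
  have iso: "\<And>u u'. u \<in> U \<Longrightarrow> u' \<in> U \<Longrightarrow> d (F u) (F u') = d u u'"
    using assms(6) unfolding bool_isometry_def by blast
  have genU: "\<exists>n xs a. (\<forall>i\<le>n. xs i \<in> SU) \<and> is_partition n a \<and> convex_comb d u n xs a"
    if "u \<in> U" for u
    using SU(3) that by (rule bspec)
  show ?thesis
    by (rule global[OF assms(4) FU iso SU(1,2) genU])
qed

end
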